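(* Let $n>0$ be a natural number and let $A=pqs(n,cs',us',ds')$ be an atom (possibly non-ground) such that $cs'$ is a list of length $n$ and every ground instance of $A$ belongs to $S$. Then $cs'$ is a list of distinct members whose members are exactly $1,\dots,n$, and it is a solution of the $n$ queens problem: placing, for each $j\in\{1,\dots,n\}$, the queen of row $j$ in column $k$ where $j$ is the $k$-th member of $cs'$, no two queens share a row, a column, or a diagonal (i.e. for distinct $j,j'$ in columns $k,k'$ one has $k\ne k'$, $k+j\ne k'+j'$ and $k-j\ne k'-j'$). In particular, since NQUEENS is correct w.r.t. $S$, this holds for every answer of NQUEENS that is an instance of a query $pqs(n,q_0,X,Y)$ with $q_0$ a list of $n$ distinct variables.
   Context: Terms are built over a fixed alphabet containing the constant $0$, the unary symbol $s$, the list constant $[\,]$ and the binary list constructor $[\cdot|\cdot]$; $\mathcal{HU}$ is the set of ground terms and $\mathcal{HB}$ the set of ground atoms. A natural number $i$ is identified with the term $s^i(0)$. Prolog list notation is used: $[e_1,\dots,e_n|e]$ stands for $e$ when $n=0$, and a list of length $n$ is a term $[e_1,\dots,e_n]$. A term $e$ is the $k$-th member of a term $t$ ($k\ge 1$) if $t=[e_1,\dots,e_{k-1},e|e']$ for some terms $e_1,\dots,e_{k-1},e'$; $e$ is a member of $t$ if it is its $k$-th member for some $k$. A list of distinct members is a list whose elements are pairwise distinct. The program NQUEENS consists of the definite clauses (capitalized names are variables): (C1) $pqs(0,X_1,X_2,X_3)$. (C2) $pqs(s(I),Cs,Us,[X|Ds]) \gets pqs(I,Cs,[Y|Us],Ds),\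 pq(s(I),Cs,Us,Ds)$. (C3) $pq(I,[I|X_1],[I|X_2],[I|X_3])$. (C4) $pq(I,[X_1|Cs],[X_2|Us],[X_3|Ds]) \gets pq(I,Cs,Us,Ds)$. An answer of a program $P$ is a query $Q$ with $P\models Q$. A program $P$ is correct w.r.t. a set $S\subseteq\mathcal{HB}$ if its least Herbrand model is contained in $S$. If a number $j$ is the $k$-th member of a list $cs$, the up-diagonal number of $j$ w.r.t. $i$ in $cs$ is $k+j-i$ and the down-diagonal number is $k+i-j$. A triple $(cs,us,ds)$ of terms is correct up to $m$ w.r.t. $i$ when $0\le m\le i$ and: $cs$ is a list of distinct members and each $j\in\{1,\dots,m\}$ is a member of $cs$; the up-diagonal numbers of $1,\dots,m$ in $cs$ are pairwise distinct, and likewise the down-diagonal numbers; and for each $j\in\{1,\dots,m\}$, if the up-diagonal (resp. down-diagonal) number of $j$ w.r.t. $i$ in $cs$ is $l>0$, then the $l$-th member of $us$ (resp. $ds$) is $j$. Specifications: $S_{pq}=\{pq(i,[c_1,\dots,c_k,i|c],[u_1,\dots,u_k,i|u],[d_1,\dots,d_k,i|d])\in\mathcal{HB}\mid k\ge0\}$; $S_{pqs}=\{pqs(0,cs,us,ds)\mid cs,us,ds\in\mathcal{HU}\}\cup\{pqs(i,cs,us,[t|ds])\in\mathcal{HB}\mid i>0$, $1,\dots,i$ are members of $cs$, and if $cs$ is a list of distinct members then $(cs,us,ds)$ is correct up to $i$ w.r.t. $i\}$; $S=S_{pq}\cup S_{pqs}$. *)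

theory Defs
  imports Main
begin

datatype trm = V nat | Zr | Sc trm | Nl | Cs trm trm

datatype atom = Pqs trm trm trm trm | Pq trm trm trm trm

fun ground :: "trm \<Rightarrow> bool" where
  "ground (V x) = False"
| "ground Zr = True"
| "ground (Sc t) = ground t"
| "ground Nl = True"
| "ground (Cs a b) = (ground a \<and> ground b)"

fun ground_atom :: "atom \<Rightarrow> bool" where
  "ground_atom (Pqs a b c d) = (ground a \<and> ground b \<and> ground c \<and> ground d)"
| "ground_atom (Pq a b c d) = (ground a \<and> ground b \<and> ground c \<and> ground d)"

fun subst :: "(nat \<Rightarrow> trm) \<Rightarrow> trm \<Rightarrow> trm" where
  "subst \<sigma> (V x) = \<sigma> x"
| "subst \<sigma> Zr = Zr"
| "subst \<sigma> (Sc t) = Sc (subst \<sigma> t)"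
| "subst \<sigma> Nl = Nl"
| "subst \<sigma> (Cs a b) = Cs (subst \<sigma> a) (subst \<sigma> b)"

fun atom_subst :: "(nat \<Rightarrow> trm) \<Rightarrow> atom \<Rightarrow> atom" where
  "atom_subst \<sigma> (Pqs a b c d) = Pqs (subst \<sigma> a) (subst \<sigma> b) (subst \<sigma> c) (subst \<sigma> d)"
| "atom_subst \<sigma> (Pq a b c d) = Pq (subst \<sigma> a) (subst \<sigma> b) (subst \<sigma> c) (subst \<sigma> d)"

definition ground_instances :: "atom \<Rightarrow> atom set" where
  "ground_instances A = {atom_subst \<sigma> A | \<sigma>. ground_atom (atom_subst \<sigma> A)}"

fun num :: "nat \<Rightarrow> trm" where
  "num 0 = Zr"
| "num (Suc n) = Sc (num n)"

text \<open>Prolog list notation [e1,...,en|e] and [e1,...,en].\<close>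
definition lst :: "trm list \<Rightarrow> trm \<Rightarrow> trm" where
  "lst es e = foldr Cs es e"

definition list_term :: "trm list \<Rightarrow> trm" where
  "list_term es = lst es Nl"

definition kth_member :: "trm \<Rightarrow> nat \<Rightarrow> trm \<Rightarrow> bool" where
  "kth_member t k e \<longleftrightarrow> k \<ge> 1 \<and> (\<exists>es e'. length es = k - 1 \<and> t = lst (es @ [e]) e')"

definition member :: "trm \<Rightarrow> trm \<Rightarrow> bool" where
  "member e t \<longleftrightarrow> (\<exists>k. kth_member t k e)"

definition distinct_members_list :: "trm \<Rightarrow> bool" where
  "distinct_members_list t \<longleftrightarrow> (\<exists>es. t = list_term es \<and> distinct es)"

text \<open>(cs,us,ds) correct up to m w.r.t. i. Up-diagonal number of j (k-th member of cs)
  is k+j-i, down-diagonal number is k+i-j (integers).\<close>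
definition correct_upto :: "trm \<Rightarrow> trm \<Rightarrow> trm \<Rightarrow> nat \<Rightarrow> nat \<Rightarrow> bool" where
  "correct_upto cs us ds m i \<longleftrightarrow>
     m \<le> i \<and> distinct_members_list cs \<and> (\<forall>j\<in>{1..m}. member (num j) cs) \<and>
     (\<forall>j\<in>{1..m}. \<forall>j'\<in>{1..m}. \<forall>k k'. j \<noteq> j' \<and> kth_member cs k (num j) \<and> kth_member cs k' (num j')
        \<longrightarrow> int k + int j - int i \<noteq> int k' + int j' - int i
          \<and> int k + int i - int j \<noteq> int k' + int i - int j') \<and>
     (\<forall>j\<in>{1..m}. \<forall>k. kth_member cs k (num j) \<longrightarrow>
        (int k + int j - int i > 0 \<longrightarrow> kth_member us (nat (int k + int j - int i)) (num j)) \<and>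
        (int k + int i - int j > 0 \<longrightarrow> kth_member ds (nat (int k + int i - int j)) (num j)))"

definition S_pq :: "atom set" where
  "S_pq = {Pq i (lst cs (Cs i c)) (lst us (Cs i u)) (lst ds (Cs i d)) | i cs c us u ds d.
      length us = length cs \<and> length ds = length cs \<and>
      ground_atom (Pq i (lst cs (Cs i c)) (lst us (Cs i u)) (lst ds (Cs i d)))}"

definition S_pqs :: "atom set" where
  "S_pqs = {Pqs Zr cs us ds | cs us ds. ground cs \<and> ground us \<and> ground ds}
     \<union> {Pqs (num i) cs us (Cs t ds) | i cs us t ds.
          ground_atom (Pqs (num i) cs us (Cs t ds)) \<and> i > 0 \<and>
          (\<forall>j\<in>{1..i}. member (num j) cs) \<and>
          (distinct_members_list cs \<longrightarrow> correct_upto cs us ds i i)}"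

definition S :: "atom set" where
  "S = S_pq \<union> S_pqs"

section \<open>Least Herbrand model of NQUEENS (least set closed under ground instances of C1--C4)\<close>

inductive_set nqueens_lhm :: "atom set" where
  C1: "\<lbrakk>ground x1; ground x2; ground x3\<rbrakk> \<Longrightarrow> Pqs Zr x1 x2 x3 \<in> nqueens_lhm"
| C2: "\<lbrakk>ground x; ground y; Pqs i cs (Cs y us) ds \<in> nqueens_lhm; Pq (Sc i) cs us ds \<in> nqueens_lhm\<rbrakk>
        \<Longrightarrow> Pqs (Sc i) cs us (Cs x ds) \<in> nqueens_lhm"
| C3: "\<lbrakk>ground i; ground x1; ground x2; ground x3\<rbrakk> \<Longrightarrow> Pq i (Cs i x1) (Cs i x2) (Cs i x3) \<in> nqueens_lhm"
| C4: "\<lbrakk>ground x1; ground x2; ground x3; Pq i cs us ds \<in> nqueens_lhm\<rbrakk>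
        \<Longrightarrow> Pq i (Cs x1 cs) (Cs x2 us) (Cs x3 ds) \<in> nqueens_lhm"

definition nqueens_answer :: "atom \<Rightarrow> bool" where
  "nqueens_answer Q \<longleftrightarrow> ground_instances Q \<subseteq> nqueens_lhm"

definition queens_solution :: "nat \<Rightarrow> trm \<Rightarrow> bool" where
  "queens_solution n cs \<longleftrightarrow>
     (\<exists>es. cs = list_term es \<and> distinct es \<and> set es = num ` {1..n}) \<and>
     (\<forall>j\<in>{1..n}. \<forall>j'\<in>{1..n}. \<forall>k k'. j \<noteq> j' \<and> kth_member cs k (num j) \<and> kth_member cs k' (num j')
        \<longrightarrow> k \<noteq> k' \<and> k + j \<noteq> k' + j' \<and> int k - int j \<noteq> int k' - int j')"

end

theory Submission
  imports Defs
begin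

fun tnth :: "trm \<Rightarrow> nat \<Rightarrow> trm option" where
  "tnth (Cs a b) 0 = Some a"
| "tnth (Cs a b) (Suc n) = tnth b n"
| "tnth _ _ = None"

lemma lst_simps[simp]: "lst [] r = r" "lst (x#xs) r = Cs x (lst xs r)"
  by (simp_all add: lst_def)

lemma lst_append[simp]: "lst (xs@ys) r = lst xs (lst ys r)"
  by (simp add: lst_def)

lemma tnth_lst_iff: "tnth t n = Some e \<longleftrightarrow> (\<exists>es e'. length es = n \<and> t = lst es (Cs e e'))"
proof (induction n arbitrary: t)
  case 0
  then show ?case by (cases t) auto
next
  case (Suc n)
  show ?case
  proof
    assume "tnth t (Suc n) = Some e"
    then obtain a b where t: "t = Cs a b" and "tnth b n = Some e" by (cases t) auto
    then obtain es e' where "length es = n" "b = lst es (Cs e e')" using Suc by blast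
    then show "\<exists>es e'. length es = Suc n \<and> t = lst es (Cs e e')" using t
      by (intro exI[of _ "a#es"] exI[of _ e']) auto
  next
    assume "\<exists>es e'. length es = Suc n \<and> t = lst es (Cs e e')"
    then obtain es e' where "length es = Suc n" "t = lst es (Cs e e')" by blast
    then show "tnth t (Suc n) = Some e" using Suc by (cases es) auto
  qed
qed

lemma kth_member_tnth: "kth_member t k e \<longleftrightarrow> k \<ge> 1 \<and> tnth t (k - 1) = Some e"
  unfolding kth_member_def tnth_lst_iff by auto

lemma tnth_lst: "tnth (lst xs r) n = (if n < length xs then Some (xs!n) else tnth r (n - length xs))"
  by (induction xs arbitrary: n) (auto simp: nth_Cons split: nat.splits)

lemma tnth_Nl[simp]: "tnth Nl n = None" by (cases n) auto

lemma tnth_list_term: "tnth (list_term xs) n = (if n < length xs then Some (xs!n) else None)"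
  by (simp add: list_term_def tnth_lst)

lemma member_list_term: "member e (list_term xs) \<longleftrightarrow> e \<in> set xs"
  unfolding member_def kth_member_tnth tnth_list_term
  by (auto simp: in_set_conv_nth)

lemma forall_kth: "(\<forall>k. kth_member t k e \<longrightarrow> P k) \<longleftrightarrow> (\<forall>k. tnth t k = Some e \<longrightarrow> P (Suc k))"
  unfolding kth_member_tnth
  by (metis One_nat_def Suc_le_eq Suc_pred diff_Suc_1 le_add1 plus_1_eq_Suc)

lemma num_inj[simp]: "num i = num j \<longleftrightarrow> i = j"
  by (induction i arbitrary: j) (case_tac j; auto)+

lemma num_Zr[simp]: "num i = Zr \<longleftrightarrow> i = 0" by (cases i) auto

lemma subst_num[simp]: "subst \<sigma> (num n) = num n" by (induction n) auto

lemma subst_lst: "subst \<sigma> (lst xs r) = lst (map (subst \<sigma>) xs) (subst \<sigma> r)"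
  by (induction xs) auto

lemma subst_list_term: "subst \<sigma> (list_term xs) = list_term (map (subst \<sigma>) xs)"
  by (simp add: list_term_def subst_lst)

lemma ground_subst: "(\<And>x. ground (\<sigma> x)) \<Longrightarrow> ground (subst \<sigma> t)"
  by (induction t) auto

lemma subst_Nl_num: "subst (\<lambda>_. Nl) e = num j \<Longrightarrow> e = num j"
  by (induction j arbitrary: e) (case_tac e; auto)+

lemma forall_kth2: "(\<forall>k k'. Q \<and> kth_member t k e \<and> kth_member t k' e' \<longrightarrow> P k k') \<longleftrightarrow>
   (\<forall>k k'. Q \<and> tnth t k = Some e \<and> tnth t k' = Some e' \<longrightarrow> P (Suc k) (Suc k'))"
  unfolding kth_member_tnth
  by (metis One_nat_def Suc_le_eq Suc_pred diff_Suc_1 le_add1 plus_1_eq_Suc)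

lemma nat_aux: "i < k + 1 + j \<Longrightarrow> nat (int (Suc k) + int j - int i) = Suc (k + j - i)" by simp
lemma nat_aux2: "j < k + 1 + i \<Longrightarrow> nat (int (Suc k) + int i - int j) = Suc (k + i - j)" by simp

lemma correct_upto_alt: "correct_upto cs us ds m i \<longleftrightarrow> m \<le> i \<and> distinct_members_list cs \<and> (\<forall>j\<in>{1..m}. member (num j) cs) \<and>
 (\<forall>j\<in>{1..m}. \<forall>j'\<in>{1..m}. \<forall>k k'. j\<noteq>j' \<and> tnth cs k = Some (num j) \<and> tnth cs k' = Some (num j')
     \<longrightarrow> k+j \<noteq> k'+j' \<and> int k - int j \<noteq> int k' - int j') \<and>
 (\<forall>j\<in>{1..m}. \<forall>k. tnth cs k = Some (num j) \<longrightarrow>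
    (i < k+1+j \<longrightarrow> tnth us (k+j-i) = Some (num j)) \<and> (j < k+1+i \<longrightarrow> tnth ds (k+i-j) = Some (num j)))"
proof -
  have A: "(\<forall>k. tnth cs k = Some (num j) \<longrightarrow>
        (0 < int (Suc k) + int j - int i \<longrightarrow> kth_member us (nat (int (Suc k) + int j - int i)) (num j)) \<and>
        (0 < int (Suc k) + int i - int j \<longrightarrow> kth_member ds (nat (int (Suc k) + int i - int j)) (num j)))
     \<longleftrightarrow> (\<forall>k. tnth cs k = Some (num j) \<longrightarrow>
    (i < k+1+j \<longrightarrow> tnth us (k+j-i) = Some (num j)) \<and> (j < k+1+i \<longrightarrow> tnth ds (k+i-j) = Some (num j)))" for j
  proof -
    have "(0 < int (Suc k) + int j - int i) = (i < k+1+j)" for k by auto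
    moreover have "(0 < int (Suc k) + int i - int j) = (j < k+1+i)" for k by auto
    ultimately show ?thesis by (auto simp: kth_member_tnth nat_aux nat_aux2 simp del: of_nat_Suc)
  qed
  have B: "(int k + int j = int k' + int j') = (k+j = k'+j')" for k j k' j' :: nat by linarith
  show ?thesis
    unfolding correct_upto_def forall_kth2 forall_kth A by (simp add: B)
qed


lemma member_tnth: "member e t \<longleftrightarrow> (\<exists>k. tnth t k = Some e)"
  unfolding member_def kth_member_tnth
  by (metis One_nat_def Suc_le_eq Suc_pred diff_Suc_1 le_add1 plus_1_eq_Suc)

lemma dml_unique: "distinct_members_list cs \<Longrightarrow> tnth cs k = Some e \<Longrightarrow> tnth cs k' = Some e \<Longrightarrow> k = k'"
  unfolding distinct_members_list_def
  by (auto simp: tnth_list_term nth_eq_iff_index_eq split: if_splits)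

lemma S_pq_iff: "Pq i cs us ds \<in> S_pq \<longleftrightarrow> ground_atom (Pq i cs us ds) \<and>
   (\<exists>k. tnth cs k = Some i \<and> tnth us k = Some i \<and> tnth ds k = Some i)"
proof
  assume "Pq i cs us ds \<in> S_pq"
  then obtain cs0 c us0 u ds0 d where "cs = lst cs0 (Cs i c)" "us = lst us0 (Cs i u)" "ds = lst ds0 (Cs i d)"
    "length us0 = length cs0" "length ds0 = length cs0" "ground_atom (Pq i cs us ds)"
    unfolding S_pq_def by auto
  then show "ground_atom (Pq i cs us ds) \<and> (\<exists>k. tnth cs k = Some i \<and> tnth us k = Some i \<and> tnth ds k = Some i)"
    by (auto simp: tnth_lst_iff)
next
  assume "ground_atom (Pq i cs us ds) \<and> (\<exists>k. tnth cs k = Some i \<and> tnth us k = Some i \<and> tnth ds k = Some i)"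
  then obtain k where g: "ground_atom (Pq i cs us ds)" and "tnth cs k = Some i" "tnth us k = Some i" "tnth ds k = Some i"
    by blast
  then obtain cs0 c us0 u ds0 d where "cs = lst cs0 (Cs i c)" "us = lst us0 (Cs i u)" "ds = lst ds0 (Cs i d)"
    "length us0 = k" "length ds0 = k" "length cs0 = k"
    by (auto simp: tnth_lst_iff)
  then show "Pq i cs us ds \<in> S_pq" using g unfolding S_pq_def by fastforce
qed

lemma S_pqs_iff: "Pqs a cs us dd \<in> S_pqs \<longleftrightarrow> (a = Zr \<and> ground cs \<and> ground us \<and> ground dd) \<or>
  (\<exists>i t ds. a = num i \<and> dd = Cs t ds \<and> ground a \<and> ground cs \<and> ground us \<and> ground t \<and> ground ds \<and> 0 < i \<and>
     (\<forall>j\<in>{1..i}. member (num j) cs) \<and> (distinct_members_list cs \<longrightarrow> correct_upto cs us ds i i))"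
  by (auto simp: S_pqs_def)


lemma ground_num[simp]: "ground (num n)" by (induction n) auto

lemma Sc_num_eq[simp]: "Sc (num i) = num j \<longleftrightarrow> j = Suc i"
  by (metis num.simps(2) num_inj)

lemma step_C2:
  assumes H: "Pqs i cs (Cs y us) ds \<in> S_pqs" and gx: "ground x"
    and P: "ground_atom (Pq (Sc i) cs us ds)" "tnth cs k0 = Some (Sc i)" "tnth us k0 = Some (Sc i)"
       "tnth ds k0 = Some (Sc i)"
  shows "Pqs (Sc i) cs us (Cs x ds) \<in> S_pqs"
  using H[unfolded S_pqs_iff]
proof (elim disjE exE conjE)
  assume iZ: "i = Zr" and g: "ground cs" "ground (Cs y us)" "ground ds"
  have "correct_upto cs us ds 1 1" if dml: "distinct_members_list cs"
    unfolding correct_upto_alt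
  proof (intro conjI ballI allI impI)
    show "member (num j) cs" if "j \<in> {1..1}" for j
      using that P(2) iZ by (auto simp: member_tnth)
  next
    fix j k assume j: "j \<in> {1..1::nat}" and k: "tnth cs k = Some (num j)"
    then have "k = k0" using dml_unique[OF dml k] P(2) iZ by auto
    then show "tnth us (k + j - 1) = Some (num j)" "tnth ds (k + 1 - j) = Some (num j)"
      using j P iZ by auto
  qed (use dml in auto)
  then show ?thesis unfolding S_pqs_iff
    apply -
    apply (rule disjI2, rule exI[of _ 1], rule exI[of _ x], rule exI[of _ ds])
    using iZ g gx P(1) P(2) by (auto simp: member_tnth)
next
  fix i0 t ds2
  assume i: "i = num i0" and ds: "ds = Cs t ds2" and g: "ground i" "ground cs" "ground (Cs y us)" "ground t" "ground ds2"
    and i0: "0 < i0" and mem: "\<forall>j\<in>{1..i0}. member (num j) cs"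
    and hc: "distinct_members_list cs \<longrightarrow> correct_upto cs (Cs y us) ds2 i0 i0"
  have Si: "Sc i = num (Suc i0)" using i by simp
  have mem2: "\<forall>j\<in>{1..Suc i0}. member (num j) cs"
  proof
    fix j assume "j \<in> {1..Suc i0}"
    then consider "j \<in> {1..i0}" | "j = Suc i0" by fastforce
    then show "member (num j) cs" using mem P(2) Si by cases (auto simp: member_tnth)
  qed
  have "correct_upto cs us ds (Suc i0) (Suc i0)" if dml: "distinct_members_list cs"
  proof -
    from hc dml have hc': "correct_upto cs (Cs y us) ds2 i0 i0" by blast
    note hc2 = hc'[unfolded correct_upto_alt]
    have pw: "\<forall>j\<in>{1..i0}. \<forall>j'\<in>{1..i0}. \<forall>k k'. j\<noteq>j' \<and> tnth cs k = Some (num j) \<and> tnth cs k' = Some (num j')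
     \<longrightarrow> k+j \<noteq> k'+j' \<and> int k - int j \<noteq> int k' - int j'" using hc2 by blast
    have lc: "\<forall>j\<in>{1..i0}. \<forall>k. tnth cs k = Some (num j) \<longrightarrow>
    (i0 < k+1+j \<longrightarrow> tnth (Cs y us) (k+j-i0) = Some (num j)) \<and> (j < k+1+i0 \<longrightarrow> tnth ds2 (k+i0-j) = Some (num j))"
      using hc2 by blast
    have top: "k0 + Suc i0 \<noteq> k'+j' \<and> int k0 - int (Suc i0) \<noteq> int k' - int j'"
      if j': "j' \<in> {1..i0}" and k': "tnth cs k' = Some (num j')" for j' k'
    proof
      show "k0 + Suc i0 \<noteq> k'+j'"
      proof
        assume e: "k0 + Suc i0 = k' + j'"
        have "tnth (Cs y us) (k'+j'-i0) = Some (num j')" using lc j' k' e by auto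
        moreover have "k'+j'-i0 = Suc k0" using e by simp
        ultimately have "tnth us k0 = Some (num j')" by simp
        then show False using P(3) Si j' by auto
      qed
    next
      show "int k0 - int (Suc i0) \<noteq> int k' - int j'"
      proof
        assume e: "int k0 - int (Suc i0) = int k' - int j'"
        have "tnth ds2 (k'+i0-j') = Some (num j')" using lc j' k' by auto
        moreover have "k0 = Suc (k'+i0-j')" using e j' by auto
        ultimately have "tnth ds k0 = Some (num j')" using ds by simp
        then show False using P(4) Si j' by auto
      qed
    qed
    show ?thesis unfolding correct_upto_alt
    proof (intro conjI)
      show "\<forall>j\<in>{1..Suc i0}. \<forall>j'\<in>{1..Suc i0}. \<forall>k k'. j\<noteq>j' \<and> tnth cs k = Some (num j) \<and> tnth cs k' = Some (num j')
         \<longrightarrow> k+j \<noteq> k'+j' \<and> int k - int j \<noteq> int k' - int j'"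
      proof (intro ballI allI impI)
        fix j j' k k'
        assume j: "j \<in> {1..Suc i0}" and j': "j' \<in> {1..Suc i0}"
          and h: "j\<noteq>j' \<and> tnth cs k = Some (num j) \<and> tnth cs k' = Some (num j')"
        consider "j \<in> {1..i0}" "j' \<in> {1..i0}" | "j = Suc i0" "j' \<in> {1..i0}" | "j' = Suc i0" "j \<in> {1..i0}"
          using j j' h by fastforce
        then show "k+j \<noteq> k'+j' \<and> int k - int j \<noteq> int k' - int j'"
        proof cases
          case 1 then show ?thesis using pw h by blast
        next
          case 2
          then have "k = k0" using dml_unique[OF dml] h P(2) Si by metis
          then show ?thesis using top[of j' k'] 2 h by auto
        next
          case 3
          then have "k' = k0" using dml_unique[OF dml] h P(2) Si by metis
          then show ?thesis using top[of j k] 3 h by auto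
        qed
      qed
    next
      show "\<forall>j\<in>{1..Suc i0}. \<forall>k. tnth cs k = Some (num j) \<longrightarrow>
        (Suc i0 < k+1+j \<longrightarrow> tnth us (k+j-Suc i0) = Some (num j)) \<and> (j < k+1+Suc i0 \<longrightarrow> tnth ds (k+Suc i0-j) = Some (num j))"
      proof (intro ballI allI impI)
        fix j k assume j: "j \<in> {1..Suc i0}" and k: "tnth cs k = Some (num j)"
        consider "j \<in> {1..i0}" | "j = Suc i0" using j by fastforce
        then show "(Suc i0 < k+1+j \<longrightarrow> tnth us (k+j-Suc i0) = Some (num j)) \<and> (j < k+1+Suc i0 \<longrightarrow> tnth ds (k+Suc i0-j) = Some (num j))"
        proof cases
          case 1
          then have a2: "tnth ds2 (k+i0-j) = Some (num j)"
            using lc k by auto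
          show ?thesis
          proof (intro conjI impI)
            assume lt: "Suc i0 < k+1+j"
            then have a1: "tnth (Cs y us) (k+j-i0) = Some (num j)" using lc k 1 by auto
            have "k+j-i0 = Suc (k+j-Suc i0)" using lt by simp
            then show "tnth us (k+j-Suc i0) = Some (num j)" using a1 by simp
          next
            have "k+Suc i0-j = Suc (k+i0-j)" using 1 by auto
            then show "tnth ds (k+Suc i0-j) = Some (num j)" using a2 ds by simp
          qed
        next
          case 2
          then have "k = k0" using dml_unique[OF dml k] P(2) Si by metis
          then show ?thesis using 2 P Si by simp
        qed
      qed
    qed (use dml mem2 in auto)
  qed
  then show ?thesis unfolding S_pqs_iff
    apply -
    apply (rule disjI2, rule exI[of _ "Suc i0"], rule exI[of _ x], rule exI[of _ ds])
    using g gx P(1) Si mem2 by auto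
qed

lemma lhm_S: "a \<in> nqueens_lhm \<Longrightarrow> a \<in> S"
proof (induction rule: nqueens_lhm.induct)
  case (C1 x1 x2 x3)
  then show ?case by (auto simp: S_def S_pqs_iff)
next
  case (C2 x y i cs us ds)
  then have "Pqs i cs (Cs y us) ds \<in> S_pqs" "Pq (Sc i) cs us ds \<in> S_pq"
    by (auto simp: S_def S_pq_def S_pqs_def)
  then show ?case using step_C2[of i cs y us ds x] C2(1) by (auto simp: S_def S_pq_iff)
next
  case (C3 i x1 x2 x3)
  then show ?case by (auto simp: S_def S_pq_iff intro!: exI[of _ 0])
next
  case (C4 x1 x2 x3 i cs us ds)
  then have "Pq i cs us ds \<in> S_pq" by (auto simp: S_def S_pqs_def)
  then show ?case using C4 by (auto simp: S_def S_pq_iff intro!: exI[of _ "Suc k" for k])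
qed


lemma part1:
  assumes n: "0 < n" and len: "length es = n" and cs: "cs' = list_term es"
    and GI: "ground_instances (Pqs (num n) cs' us' ds') \<subseteq> S"
  shows "queens_solution n cs'"
proof -
  define \<sigma> where "\<sigma> = (\<lambda>_::nat. Nl)"
  define es1 where "es1 = map (subst \<sigma>) es"
  have gs: "ground (subst \<sigma> t)" for t by (rule ground_subst) (simp add: \<sigma>_def)
  have A: "atom_subst \<sigma> (Pqs (num n) cs' us' ds') = Pqs (num n) (list_term es1) (subst \<sigma> us') (subst \<sigma> ds')"
    by (simp add: cs es1_def subst_list_term)
  have "atom_subst \<sigma> (Pqs (num n) cs' us' ds') \<in> ground_instances (Pqs (num n) cs' us' ds')"
    unfolding ground_instances_def using gs by (auto intro!: exI[of _ \<sigma>])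
  with GI A have "Pqs (num n) (list_term es1) (subst \<sigma> us') (subst \<sigma> ds') \<in> S" by auto
  then have "Pqs (num n) (list_term es1) (subst \<sigma> us') (subst \<sigma> ds') \<in> S_pqs"
    unfolding S_def S_pq_def by auto
  then obtain t ds where mem: "\<forall>j\<in>{1..n}. member (num j) (list_term es1)"
    and cu: "distinct_members_list (list_term es1) \<longrightarrow> correct_upto (list_term es1) (subst \<sigma> us') ds n n"
    unfolding S_pqs_iff using n by auto
  have sub: "num ` {1..n} \<subseteq> set es1" using mem by (auto simp: member_list_term)
  have inj: "inj num" by (auto intro: injI)
  have c1: "card (num ` {1..n}) = n" using card_image[OF inj_on_subset[OF inj]] by auto
  have len1: "length es1 = n" using len es1_def by simp
  have c2: "card (set es1) \<le> n" using card_length len1 by metis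
  have seteq: "set es1 = num ` {1..n}"
    using card_subset_eq[OF _ sub] c1 c2 card_mono[OF _ sub] by (metis List.finite_set le_antisym)
  have dist: "distinct es1" using seteq c1 len1 card_distinct by metis
  have "es1 = es" unfolding es1_def
  proof (rule map_idI)
    fix e assume "e \<in> set es"
    then have "subst \<sigma> e \<in> num ` {1..n}" using seteq es1_def by auto
    then obtain j where "subst \<sigma> e = num j" by auto
    then show "subst \<sigma> e = e" using subst_Nl_num[of e j] \<sigma>_def by simp
  qed
  then have cs1: "cs' = list_term es1" using cs by simp
  have dml: "distinct_members_list cs'" unfolding cs1 distinct_members_list_def using dist by blast
  have pw: "\<forall>j\<in>{1..n}. \<forall>j'\<in>{1..n}. \<forall>k k'. j\<noteq>j' \<and> tnth cs' k = Some (num j) \<and> tnth cs' k' = Some (num j')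
     \<longrightarrow> k+j \<noteq> k'+j' \<and> int k - int j \<noteq> int k' - int j'"
    using cu dml cs1 unfolding correct_upto_alt by blast
  show ?thesis unfolding queens_solution_def
  proof (rule conjI)
    show "\<exists>es. cs' = list_term es \<and> distinct es \<and> set es = num ` {1..n}"
      using cs1 dist seteq by blast
  next
    show "\<forall>j\<in>{1..n}. \<forall>j'\<in>{1..n}. \<forall>k k'. j \<noteq> j' \<and> kth_member cs' k (num j) \<and> kth_member cs' k' (num j')
        \<longrightarrow> k \<noteq> k' \<and> k + j \<noteq> k' + j' \<and> int k - int j \<noteq> int k' - int j'"
    proof (intro ballI allI impI)
    fix j j' k k' assume j: "j \<in> {1..n}" and j': "j' \<in> {1..n}"
      and h: "j \<noteq> j' \<and> kth_member cs' k (num j) \<and> kth_member cs' k' (num j')"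
    then have k: "k \<ge> 1" "tnth cs' (k-1) = Some (num j)" and k': "k' \<ge> 1" "tnth cs' (k'-1) = Some (num j')"
      by (auto simp: kth_member_tnth)
    have p: "(k-1)+j \<noteq> (k'-1)+j' \<and> int (k-1) - int j \<noteq> int (k'-1) - int j'"
      using pw j j' h k k' by blast
    have "k \<noteq> k'" using k k' h by auto
    then show "k \<noteq> k' \<and> k + j \<noteq> k' + j' \<and> int k - int j \<noteq> int k' - int j'"
      using p k(1) k'(1) by (auto simp: of_nat_diff)
  qed
  qed
qed

theorem mainTheorem3:
  shows "(\<forall>n cs' us' ds'. n > 0 \<and> (\<exists>es. length es = n \<and> cs' = list_term es) \<and>
            ground_instances (Pqs (num n) cs' us' ds') \<subseteq> S
           \<longrightarrow> queens_solution n cs') \<and>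
         (\<forall>n vs x y \<theta>. n > 0 \<and> length vs = n \<and> distinct vs \<and>
            nqueens_answer (atom_subst \<theta> (Pqs (num n) (list_term (map V vs)) (V x) (V y)))
           \<longrightarrow> queens_solution n (subst \<theta> (list_term (map V vs))))"
proof (intro conjI allI impI)
  fix n cs' us' ds'
  assume "0 < n \<and> (\<exists>es. length es = n \<and> cs' = list_term es) \<and> ground_instances (Pqs (num n) cs' us' ds') \<subseteq> S"
  then show "queens_solution n cs'" using part1 by blast
next
  fix n vs x y \<theta>
  assume h: "0 < n \<and> length vs = n \<and> distinct vs \<and>
            nqueens_answer (atom_subst \<theta> (Pqs (num n) (list_term (map V vs)) (V x) (V y)))"
  have e: "atom_subst \<theta> (Pqs (num n) (list_term (map V vs)) (V x) (V y)) =
     Pqs (num n) (list_term (map \<theta> vs)) (\<theta> x) (\<theta> y)"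
    by (simp add: subst_list_term o_def)
  have "ground_instances (Pqs (num n) (list_term (map \<theta> vs)) (\<theta> x) (\<theta> y)) \<subseteq> S"
    using h lhm_S unfolding nqueens_answer_def e by blast
  then have "queens_solution n (list_term (map \<theta> vs))"
    using part1[of n "map \<theta> vs"] h by auto
  then show "queens_solution n (subst \<theta> (list_term (map V vs)))"
    by (simp add: subst_list_term o_def)
qed

end
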